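(* Let $G$ be a flag with vertices $v_1,\dots,v_n$ ordered by increasing $x$-coordinate, and let $0<i_1<i_2<i_3<i_4\le n$ with $v_{i_3},v_{i_4}$ both below the edge $v_{i_1}v_{i_2}$. Then the following are equivalent: (1) $v_{i_1}v_{i_2}$ and $v_{i_3}v_{i_4}$ cross; (2) $(v_{i_1}v_{i_2})^+$ and $(v_{i_3}v_{i_4})^-$ cross; (3) $v_{i_2}$ is below $v_{i_3}v_{i_4}$, $v_{i_1}$ is above $v_{i_3}v_{i_4}$, and $(v_{i_3}v_{i_4})^-\prec(v_{i_1}v_{i_2})^-$. Moreover, $v_{i_1}v_{i_2}$ and $v_{i_3}v_{i_4}$ are disjoint if and only if $v_{i_1},v_{i_2}$ are both above $v_{i_3}v_{i_4}$. Symmetrically, if instead $v_{i_3},v_{i_4}$ are both above $v_{i_1}v_{i_2}$, then the following are equivalent: (1) the two edges cross; (2) $(v_{i_1}v_{i_2})^+$ and $(v_{i_3}v_{i_4})^-$ cross; (3) $v_{i_2}$ is above $v_{i_3}v_{i_4}$, $v_{i_1}$ is below $v_{i_3}v_{i_4}$, and $(v_{i_1}v_{i_2})^-\prec(v_{i_3}v_{i_4})^-$; and the two edges are disjoint if and only if $v_{i_1},v_{i_2}$ are both below $v_{i_3}v_{i_4}$.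
   Context: Let $\mathcal C=S^1\times\mathbb R$ ($S^1=[0,1]$ with $0\sim1$), points $p=(p_x,p_y)$ with $0\le p_x<1$. A flag is a graph drawn on $\mathcal C$ (vertices distinct points, edges Jordan arcs, no overlapping edges, no edge through a vertex) that is complete, simple (any two edges meet in at most one point: a common endpoint or a proper crossing), monotone (every edge meets each vertical line $l_{x=a}=\{p:p_x=a\}$ at most once, no two vertices share an $x$-coordinate, no vertex has $x$-coordinate $0$), and such that $l_{x=0}$ meets every edge in its relative interior. For an edge $e=vw$ of a flag with $v_x<w_x$, $e^-$ is the part of $e$ consisting of points with $x$-coordinate smaller than $v_x$ and $e^+$ the part consisting of points with $x$-coordinate greater than $w_x$. A point $v$ is related to an $x$-monotone curve $e$ if $l_{x=v_x}$ meets $e$ in its relative interior; then $v$ is below (above) $e$ if $v_y$ is smaller (larger) than the $y$-coordinate of $l_{x=v_x}\cap e$. Two $x$-monotone curves $e,f$ are related if they do not cross, some vertical line meets both relative interiors, and all such lines meet them in the same vertical order; then $e\prec f$ means that on every vertical line meeting both relative interiors, $e$'s point has $y$-coordinate at most that of $f$'s point. Two edges are disjoint if they share no point. *)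

theory Defs
  imports "HOL-Analysis.Analysis"
begin

text \<open>
Cylinder C = S^1 x R, points (x,y) with 0 <= x < 1.  A real t is sent to the
point of S^1 with x-coordinate frac t.  An x-monotone Jordan arc on C is the
graph of a continuous function over an arc of S^1; we represent it by an
"unrolled" parameter interval [a,b] (with b - a < 1, so that the projection
to S^1 is injective) and a continuous g on [a,b]; its points are
(frac t, g t) for a <= t <= b.
\<close>

type_synonym point = "real \<times> real"
type_synonym edge = "real \<times> real \<times> (real \<Rightarrow> real)"

definition e_lo :: "edge \<Rightarrow> real" where "e_lo e = fst e"
definition e_hi :: "edge \<Rightarrow> real" where "e_hi e = fst (snd e)"
definition e_fun :: "edge \<Rightarrow> real \<Rightarrow> real" where "e_fun e = snd (snd e)"

definition edge_pts :: "edge \<Rightarrow> point set" where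
  "edge_pts e = {(frac t, e_fun e t) | t. e_lo e \<le> t \<and> t \<le> e_hi e}"

definition edge_relint :: "edge \<Rightarrow> point set" where
  "edge_relint e = {(frac t, e_fun e t) | t. e_lo e < t \<and> t < e_hi e}"

definition edge_y :: "edge \<Rightarrow> real \<Rightarrow> real" where
  "edge_y e x = e_fun e (THE t. e_lo e \<le> t \<and> t \<le> e_hi e \<and> frac t = frac x)"

definition monotone_arc :: "edge \<Rightarrow> point \<Rightarrow> point \<Rightarrow> bool" where
  "monotone_arc e v w \<longleftrightarrow> e_lo e < e_hi e \<and> e_hi e - e_lo e < 1 \<and>
     continuous_on {e_lo e..e_hi e} (e_fun e) \<and>
     {(frac (e_lo e), e_fun e (e_lo e)), (frac (e_hi e), e_fun e (e_hi e))} = {v, w}"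

text \<open>The line l_{x=0} meets the relative interior of the edge.\<close>
definition meets_zero_line :: "edge \<Rightarrow> bool" where
  "meets_zero_line e \<longleftrightarrow> (\<exists>k::int. e_lo e < of_int k \<and> of_int k < e_hi e)"

definition proper_cross :: "edge \<Rightarrow> edge \<Rightarrow> point \<Rightarrow> bool" where
  "proper_cross e f p \<longleftrightarrow> p \<in> edge_relint e \<and> p \<in> edge_relint f \<and>
     (\<exists>\<delta>>0.
        (\<forall>s. 0 < s \<and> s < \<delta> \<longrightarrow>
            edge_y e (fst p - s) < edge_y f (fst p - s) \<and> edge_y f (fst p + s) < edge_y e (fst p + s)) \<or>
        (\<forall>s. 0 < s \<and> s < \<delta> \<longrightarrow>
            edge_y f (fst p - s) < edge_y e (fst p - s) \<and> edge_y e (fst p + s) < edge_y f (fst p + s)))"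

definition edges_cross :: "edge \<Rightarrow> edge \<Rightarrow> bool" where
  "edges_cross e f \<longleftrightarrow> (\<exists>p. proper_cross e f p)"

definition edges_disjoint :: "edge \<Rightarrow> edge \<Rightarrow> bool" where
  "edges_disjoint e f \<longleftrightarrow> edge_pts e \<inter> edge_pts f = {}"

definition pt_below :: "point \<Rightarrow> edge \<Rightarrow> bool" where
  "pt_below p e \<longleftrightarrow> (\<exists>t. e_lo e < t \<and> t < e_hi e \<and> frac t = fst p \<and> snd p < e_fun e t)"

definition pt_above :: "point \<Rightarrow> edge \<Rightarrow> bool" where
  "pt_above p e \<longleftrightarrow> (\<exists>t. e_lo e < t \<and> t < e_hi e \<and> frac t = fst p \<and> e_fun e t < snd p)"

definition is_flag :: "nat \<Rightarrow> (nat \<Rightarrow> point) \<Rightarrow> (nat \<Rightarrow> nat \<Rightarrow> edge) \<Rightarrow> bool" where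
  "is_flag n v E \<longleftrightarrow>
     (\<forall>i\<in>{1..n}. 0 < fst (v i) \<and> fst (v i) < 1) \<and>
     (\<forall>i j. 1 \<le> i \<and> i < j \<and> j \<le> n \<longrightarrow> fst (v i) < fst (v j)) \<and>
     (\<forall>i j. 1 \<le> i \<and> i < j \<and> j \<le> n \<longrightarrow> monotone_arc (E i j) (v i) (v j) \<and> meets_zero_line (E i j)) \<and>
     (\<forall>i j k. 1 \<le> i \<and> i < j \<and> j \<le> n \<and> k \<in> {1..n} \<and> k \<noteq> i \<and> k \<noteq> j \<longrightarrow> v k \<notin> edge_pts (E i j)) \<and>
     (\<forall>i j k l. 1 \<le> i \<and> i < j \<and> j \<le> n \<and> 1 \<le> k \<and> k < l \<and> l \<le> n \<and> (i, j) \<noteq> (k, l) \<longrightarrow>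
        (\<forall>p\<in>edge_pts (E i j) \<inter> edge_pts (E k l). \<forall>q\<in>edge_pts (E i j) \<inter> edge_pts (E k l). p = q) \<and>
        (\<forall>p\<in>edge_pts (E i j) \<inter> edge_pts (E k l).
            p \<in> {v i, v j} \<inter> {v k, v l} \<or> proper_cross (E i j) (E k l) p))"

text \<open>Sub-curves of edges: a parent edge, the set of x-coordinates of its points, and
the set of x-coordinates of its relative interior.\<close>
type_synonym curve = "edge \<times> real set \<times> real set"

definition curve_pts :: "curve \<Rightarrow> point set" where
  "curve_pts c = {p \<in> edge_pts (fst c). fst p \<in> fst (snd c)}"

definition curve_rixs :: "curve \<Rightarrow> real set" where
  "curve_rixs c = snd (snd c)"

text \<open>For the edge e = vw with v_x < w_x: e^- consists of the points with x-coordinate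
in [0, v_x) (relative interior: x in (0, v_x)); e^+ of the points with x in (w_x, 1).\<close>
definition minus_part :: "edge \<Rightarrow> point \<Rightarrow> curve" where
  "minus_part e v = (e, {0..<fst v}, {0<..<fst v})"

definition plus_part :: "edge \<Rightarrow> point \<Rightarrow> curve" where
  "plus_part e w = (e, {fst w<..<1}, {fst w<..<1})"

definition curves_cross :: "curve \<Rightarrow> curve \<Rightarrow> bool" where
  "curves_cross c d \<longleftrightarrow>
     (\<exists>p. p \<in> curve_pts c \<and> p \<in> curve_pts d \<and> proper_cross (fst c) (fst d) p)"

definition curves_related :: "curve \<Rightarrow> curve \<Rightarrow> bool" where
  "curves_related c d \<longleftrightarrow> \<not> curves_cross c d \<and>
     curve_rixs c \<inter> curve_rixs d \<noteq> {} \<and>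
     ((\<forall>x\<in>curve_rixs c \<inter> curve_rixs d. edge_y (fst c) x < edge_y (fst d) x) \<or>
      (\<forall>x\<in>curve_rixs c \<inter> curve_rixs d. edge_y (fst d) x < edge_y (fst c) x))"

definition curve_prec :: "curve \<Rightarrow> curve \<Rightarrow> bool" where
  "curve_prec c d \<longleftrightarrow> curves_related c d \<and>
     (\<forall>x\<in>curve_rixs c \<inter> curve_rixs d. edge_y (fst c) x \<le> edge_y (fst d) x)"

end

theory Submission
  imports Defs
begin


lemma nozero_sign:
  fixes D :: "real \<Rightarrow> real"
  assumes c: "continuous_on {l..r} D" and lr: "l \<le> r" and nz: "\<forall>s\<in>{l..r}. D s \<noteq> 0"
  shows "D l < 0 \<longleftrightarrow> D r < 0"
proof
  assume "D l < 0"
  show "D r < 0"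
  proof (rule ccontr)
    assume "\<not> D r < 0"
    then have "0 \<le> D r" by simp
    from IVT'[of D l 0 r, OF less_imp_le[OF \<open>D l < 0\<close>] this lr c]
    obtain x where "l \<le> x" "x \<le> r" "D x = 0" by blast
    with nz show False by auto
  qed
next
  assume "D r < 0"
  show "D l < 0"
  proof (rule ccontr)
    assume "\<not> D l < 0"
    then have "0 \<le> D l" by simp
    from IVT2'[of D r 0 l, OF less_imp_le[OF \<open>D r < 0\<close>] this lr c]
    obtain x where "l \<le> x" "x \<le> r" "D x = 0" by blast
    with nz show False by auto
  qed
qed

lemma one_cross:
  fixes D :: "real \<Rightarrow> real"
  assumes c: "continuous_on {l..r} D" and lr: "l \<le> r" and nl: "D l \<noteq> 0" and nr: "D r \<noteq> 0"
    and uniq: "\<And>z z'. z \<in> {l..r} \<Longrightarrow> z' \<in> {l..r} \<Longrightarrow> D z = 0 \<Longrightarrow> D z' = 0 \<Longrightarrow> z = z'"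
    and sc: "\<And>z. z \<in> {l..r} \<Longrightarrow> D z = 0 \<Longrightarrow>
       \<exists>\<delta>>0. \<forall>\<sigma>. 0 < \<sigma> \<and> \<sigma> < \<delta> \<longrightarrow> D (z - \<sigma>) * D (z + \<sigma>) < 0"
  shows "(\<exists>z\<in>{l..r}. D z = 0) \<longleftrightarrow> (D l < 0 \<longleftrightarrow> 0 < D r)"
proof
  assume "\<exists>z\<in>{l..r}. D z = 0"
  then obtain z where z: "z \<in> {l..r}" "D z = 0" by blast
  have lz: "l < z" using z nl by (cases "l = z") auto
  have zr: "z < r" using z nr by (cases "r = z") auto
  obtain \<delta> where d: "\<delta> > 0" "\<forall>\<sigma>. 0 < \<sigma> \<and> \<sigma> < \<delta> \<longrightarrow> D (z - \<sigma>) * D (z + \<sigma>) < 0"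
    using sc[OF z] by blast
  define \<sigma> where "\<sigma> = min \<delta> (min (z - l) (r - z)) / 2"
  have s: "0 < \<sigma>" "\<sigma> < \<delta>" "\<sigma> < z - l" "\<sigma> < r - z" using d lz zr by (auto simp: \<sigma>_def)
  have p: "D (z - \<sigma>) * D (z + \<sigma>) < 0" using d s by auto
  have c1: "continuous_on {l..z-\<sigma>} D" by (rule continuous_on_subset[OF c]) (use s in auto)
  have c2: "continuous_on {z+\<sigma>..r} D" by (rule continuous_on_subset[OF c]) (use s in auto)
  have n1: "\<forall>s\<in>{l..z-\<sigma>}. D s \<noteq> 0"
  proof
    fix s assume "s \<in> {l..z-\<sigma>}"
    then show "D s \<noteq> 0" using uniq[of s z] z s by auto
  qed
  have n2: "\<forall>s\<in>{z+\<sigma>..r}. D s \<noteq> 0"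
  proof
    fix s assume "s \<in> {z+\<sigma>..r}"
    then show "D s \<noteq> 0" using uniq[of s z] z s by auto
  qed
  have e1: "D l < 0 \<longleftrightarrow> D (z-\<sigma>) < 0" using nozero_sign[OF c1 _ n1] s by auto
  have e2: "D (z+\<sigma>) < 0 \<longleftrightarrow> D r < 0" using nozero_sign[OF c2 _ n2] s by auto
  show "D l < 0 \<longleftrightarrow> 0 < D r"
    using e1 e2 p nr by (auto simp: mult_less_0_iff)
next
  assume h: "D l < 0 \<longleftrightarrow> 0 < D r"
  show "\<exists>z\<in>{l..r}. D z = 0"
  proof (cases "D l < 0")
    case True
    then show ?thesis using IVT'[of D l 0 r] h lr c by fastforce
  next
    case False
    then have "0 \<le> D l" "D r \<le> 0" using h by auto
    then show ?thesis using IVT2'[of D r 0 l] lr c by fastforce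
  qed
qed



lemma core:
  fixes x1 x2 x3 x4 :: real and E F G :: "real \<Rightarrow> real"
  assumes x: "0 < x1" "x1 < x2" "x2 < x3" "x3 < x4" "x4 < 1"
    and cE: "continuous_on {x2..1+x1} E" and cF: "continuous_on {x4..1+x3} F"
    and cG: "continuous_on {x3..1+x2} G"
    and uniq: "\<And>s s'. ((x4 \<le> s \<and> s \<le> 1+x1 \<and> F s = E s) \<or> (x2 \<le> s \<and> s \<le> x3 \<and> F (s+1) = E s)) \<Longrightarrow>
                   ((x4 \<le> s' \<and> s' \<le> 1+x1 \<and> F s' = E s') \<or> (x2 \<le> s' \<and> s' \<le> x3 \<and> F (s'+1) = E s')) \<Longrightarrow> s = s'"
    and crA: "\<And>s. x4 \<le> s \<Longrightarrow> s \<le> 1+x1 \<Longrightarrow> F s = E s \<Longrightarrow>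
       \<exists>\<delta>>0. \<forall>\<sigma>. 0 < \<sigma> \<and> \<sigma> < \<delta> \<longrightarrow> (F (s-\<sigma>) - E (s-\<sigma>)) * (F (s+\<sigma>) - E (s+\<sigma>)) < 0"
    and crB: "\<And>s. x2 \<le> s \<Longrightarrow> s \<le> x3 \<Longrightarrow> F (s+1) = E s \<Longrightarrow>
       \<exists>\<delta>>0. \<forall>\<sigma>. 0 < \<sigma> \<and> \<sigma> < \<delta> \<longrightarrow> (F (s-\<sigma>+1) - E (s-\<sigma>)) * (F (s+\<sigma>+1) - E (s+\<sigma>)) < 0"
    and n4: "F x4 \<noteq> E x4" and n1: "F (1+x1) \<noteq> E (1+x1)"
    and n2: "F (x2+1) \<noteq> E x2" and n3: "F (x3+1) \<noteq> E x3"
    and G3: "G x3 = F (x3+1)" and G2: "G (1+x2) = E x2"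
    and GE: "\<forall>s\<in>{x3..1+x1}. G s \<noteq> E s" and GF: "\<forall>s\<in>{x4..1+x2}. G s \<noteq> F s"
    and b4: "F x4 < E x4" and b3: "F (x3+1) < E x3"
  shows "\<forall>s\<in>{x4..1+x1}. F s < E s"
    and "(\<exists>s\<in>{x2..x3}. F (s+1) = E s) \<longleftrightarrow> E x2 < F (x2+1)"
proof -
  define dA where "dA = (\<lambda>s. F s - E s)"
  define dB where "dB = (\<lambda>s. F (s+1) - E s)"
  have cA: "continuous_on {x4..1+x1} dA" unfolding dA_def
    by (intro continuous_on_diff continuous_on_subset[OF cF] continuous_on_subset[OF cE]) (use x in auto)
  have cF1: "continuous_on {x2..x3} (\<lambda>s. F (s+1))"
    by (rule continuous_on_compose2[OF cF]) (use x in \<open>auto intro!: continuous_intros\<close>)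
  have cB: "continuous_on {x2..x3} dB" unfolding dB_def
    by (intro continuous_on_diff cF1 continuous_on_subset[OF cE]) (use x in auto)
  have PA: "(\<exists>z\<in>{x4..1+x1}. dA z = 0) \<longleftrightarrow> (dA x4 < 0 \<longleftrightarrow> 0 < dA (1+x1))"
  proof (rule one_cross[OF cA])
    show "x4 \<le> 1+x1" using x by auto
    show "dA x4 \<noteq> 0" "dA (1+x1) \<noteq> 0" using n4 n1 by (auto simp: dA_def)
    show "z = z'" if "z \<in> {x4..1+x1}" "z' \<in> {x4..1+x1}" "dA z = 0" "dA z' = 0" for z z'
      using uniq[of z z'] that by (auto simp: dA_def)
    show "\<exists>\<delta>>0. \<forall>\<sigma>. 0 < \<sigma> \<and> \<sigma> < \<delta> \<longrightarrow> dA (z - \<sigma>) * dA (z + \<sigma>) < 0"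
      if "z \<in> {x4..1+x1}" "dA z = 0" for z
      using crA[of z] that by (auto simp: dA_def)
  qed
  have PB: "(\<exists>z\<in>{x2..x3}. dB z = 0) \<longleftrightarrow> (dB x2 < 0 \<longleftrightarrow> 0 < dB x3)"
  proof (rule one_cross[OF cB])
    show "x2 \<le> x3" using x by auto
    show "dB x2 \<noteq> 0" "dB x3 \<noteq> 0" using n2 n3 by (auto simp: dB_def)
    show "z = z'" if "z \<in> {x2..x3}" "z' \<in> {x2..x3}" "dB z = 0" "dB z' = 0" for z z'
      using uniq[of z z'] that by (auto simp: dB_def)
    show "\<exists>\<delta>>0. \<forall>\<sigma>. 0 < \<sigma> \<and> \<sigma> < \<delta> \<longrightarrow> dB (z - \<sigma>) * dB (z + \<sigma>) < 0"
      if "z \<in> {x2..x3}" "dB z = 0" for z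
      using crB[of z] that by (auto simp: dB_def)
  qed
  have noA: "\<not> (\<exists>z\<in>{x4..1+x1}. dA z = 0)"
  proof
    assume zA: "\<exists>z\<in>{x4..1+x1}. dA z = 0"
    then have hA: "0 < dA (1+x1)" using PA b4 by (auto simp: dA_def)
    have nB: "\<not> (\<exists>z\<in>{x2..x3}. dB z = 0)"
    proof
      assume "\<exists>z\<in>{x2..x3}. dB z = 0"
      then obtain z' where "z' \<in> {x2..x3}" "dB z' = 0" by blast
      moreover obtain z where "z \<in> {x4..1+x1}" "dA z = 0" using zA by blast
      ultimately have "z = z'" using uniq[of z z'] by (auto simp: dA_def dB_def)
      then show False using \<open>z' \<in> {x2..x3}\<close> \<open>z \<in> {x4..1+x1}\<close> x by auto
    qed
    have hB: "dB x2 < 0" using PB nB b3 n2 by (auto simp: dB_def)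
    have cGE: "continuous_on {x3..1+x1} (\<lambda>s. G s - E s)"
      by (intro continuous_on_diff continuous_on_subset[OF cG] continuous_on_subset[OF cE]) (use x in auto)
    have cGF: "continuous_on {x4..1+x2} (\<lambda>s. G s - F s)"
      by (intro continuous_on_diff continuous_on_subset[OF cG] continuous_on_subset[OF cF]) (use x in auto)
    have "G (1+x1) - E (1+x1) < 0"
      using nozero_sign[OF cGE, of ] GE G3 b3 x by auto
    moreover have "G (1+x2) - F (1+x2) < 0 \<longleftrightarrow> G (1+x1) - F (1+x1) < 0"
    proof -
      have "\<forall>s\<in>{1+x1..1+x2}. G s - F s \<noteq> 0" using GF x by auto
      moreover have "continuous_on {1+x1..1+x2} (\<lambda>s. G s - F s)"
        by (rule continuous_on_subset[OF cGF]) (use x in auto)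
      ultimately show ?thesis using nozero_sign[of "1+x1" "1+x2" "\<lambda>s. G s - F s"] x by auto
    qed
    moreover have "\<not> G (1+x2) - F (1+x2) < 0" using G2 hB by (auto simp: dB_def add.commute)
    ultimately show False using hA by (auto simp: dA_def)
  qed
  show "\<forall>s\<in>{x4..1+x1}. F s < E s"
  proof
    fix s assume s: "s \<in> {x4..1+x1}"
    have "continuous_on {x4..s} dA" by (rule continuous_on_subset[OF cA]) (use s in auto)
    moreover have "\<forall>t\<in>{x4..s}. dA t \<noteq> 0" using noA s by auto
    ultimately have "dA x4 < 0 \<longleftrightarrow> dA s < 0" using nozero_sign[of x4 s dA] s by auto
    then show "F s < E s" using b4 by (auto simp: dA_def)
  qed
  show "(\<exists>s\<in>{x2..x3}. F (s+1) = E s) \<longleftrightarrow> E x2 < F (x2+1)"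
    using PB b3 n2 by (auto simp: dB_def)
qed



definition Ue :: "edge \<Rightarrow> real \<Rightarrow> real" where
  "Ue e s = e_fun e (s + of_int \<lfloor>e_lo e\<rfloor>)"

lemma frac_neq_shift: "frac (s::real) = frac t \<Longrightarrow> t < s \<Longrightarrow> s < t + 1 \<Longrightarrow> False"
proof -
  assume "frac s = frac t" "t < s" "s < t + 1"
  then obtain n where n: "s = t + of_int n" by (elim frac_eqE)
  then have "(0::real) < of_int n" "of_int n < (1::real)" using \<open>t < s\<close> \<open>s < t+1\<close> by auto
  then have "0 < n" "n < 1" by simp_all
  then show False by linarith
qed

lemma frac_inj: "frac (s::real) = frac t \<Longrightarrow> \<bar>s - t\<bar> < 1 \<Longrightarrow> s = t"
proof -
  assume "frac s = frac t" "\<bar>s - t\<bar> < 1"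
  then obtain n where n: "s = t + of_int n" by (elim frac_eqE)
  then have "\<bar>of_int n\<bar> < (1::real)" using \<open>\<bar>s - t\<bar> < 1\<close> by simp
  then have "n = 0" by linarith
  then show "s = t" using n by simp
qed

lemma frac_minus_frac: "frac (frac (a::real) - b) = frac (a - b)"
proof -
  have eq: "frac a - b = (a - b) + of_int (- \<lfloor>a\<rfloor>)" by (simp add: frac_def)
  have "frac (frac a - b) = frac ((a - b) + of_int (- \<lfloor>a\<rfloor>))" by (simp only: eq)
  also have "\<dots> = frac (a - b)" by (rule frac_add_of_int_right)
  finally show ?thesis .
qed

lemma frac_plus_frac: "frac (frac (a::real) + b) = frac (a + b)"
  by simp

lemma edge_y_frac: "frac x = frac x' \<Longrightarrow> edge_y e x = edge_y e x'"
  by (simp add: edge_y_def)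

lemma edge_shape:
  assumes fl: "is_flag n v E" and ij: "1 \<le> i" "i < j" "j \<le> n"
  shows "frac (e_lo (E i j)) = fst (v j)"
    and "e_hi (E i j) = of_int \<lfloor>e_lo (E i j)\<rfloor> + 1 + fst (v i)"
    and "Ue (E i j) (fst (v j)) = snd (v j)"
    and "Ue (E i j) (1 + fst (v i)) = snd (v i)"
    and "continuous_on {fst (v j)..1 + fst (v i)} (Ue (E i j))"
proof -
  let ?e = "E i j"
  define a where "a = e_lo ?e"
  define b where "b = e_hi ?e"
  define g where "g = e_fun ?e"
  have ma: "monotone_arc ?e (v i) (v j)" and mz: "meets_zero_line ?e"
    using fl ij unfolding is_flag_def by auto
  have xi: "0 < fst (v i)" "fst (v i) < 1" "0 < fst (v j)" "fst (v j) < 1"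
    using fl ij unfolding is_flag_def by auto
  have xij: "fst (v i) < fst (v j)" using fl ij unfolding is_flag_def by auto
  have ab: "a < b" "b - a < 1" and cg: "continuous_on {a..b} g"
    and st: "{(frac a, g a), (frac b, g b)} = {v i, v j}"
    using ma by (auto simp: monotone_arc_def a_def b_def g_def)
  obtain k :: int where k: "a < of_int k" "of_int k < b" using mz by (auto simp: meets_zero_line_def a_def b_def)
  have fa: "\<lfloor>a\<rfloor> = k - 1" using k ab by (intro floor_unique) auto
  have fb: "\<lfloor>b\<rfloor> = k" using k ab by (intro floor_unique) auto
  have fra: "frac a = a - of_int k + 1" using fa by (simp add: frac_def)
  have frb: "frac b = b - of_int k" using fb by (simp add: frac_def)
  have "frac b < frac a" using fra frb ab by simp
  have "(frac a, g a) = v i \<and> (frac b, g b) = v j \<or> (frac a, g a) = v j \<and> (frac b, g b) = v i"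
    using st by (simp add: doubleton_eq_iff)
  moreover have "\<not> ((frac a, g a) = v i \<and> (frac b, g b) = v j)"
  proof
    assume "(frac a, g a) = v i \<and> (frac b, g b) = v j"
    then have "frac a = fst (v i)" "frac b = fst (v j)" by (metis fst_conv)+
    with \<open>frac b < frac a\<close> xij show False by simp
  qed
  ultimately have "(frac a, g a) = v j \<and> (frac b, g b) = v i" by blast
  then have A: "frac a = fst (v j)" "g a = snd (v j)" "frac b = fst (v i)" "g b = snd (v i)"
    by (metis fst_conv snd_conv)+
  show "frac (e_lo ?e) = fst (v j)" using A by (simp add: a_def)
  show hb: "e_hi ?e = of_int \<lfloor>e_lo ?e\<rfloor> + 1 + fst (v i)"
    using A frb fa by (simp add: a_def[symmetric] b_def[symmetric])
  have aeq: "a = of_int \<lfloor>a\<rfloor> + fst (v j)" using A by (simp add: frac_def)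
  show "Ue ?e (fst (v j)) = snd (v j)"
    using A aeq by (simp add: Ue_def a_def[symmetric] g_def[symmetric] add.commute)
  have beq: "1 + fst (v i) + of_int \<lfloor>a\<rfloor> = b" using hb by (simp add: a_def b_def)
  show "Ue ?e (1 + fst (v i)) = snd (v i)"
    using A beq by (simp add: Ue_def a_def[symmetric] g_def[symmetric])
  show "continuous_on {fst (v j)..1 + fst (v i)} (Ue ?e)"
    unfolding Ue_def g_def[symmetric] a_def[symmetric]
  proof (rule continuous_on_compose2[OF cg])
    show "continuous_on {fst (v j)..1 + fst (v i)} (\<lambda>s. s + of_int \<lfloor>a\<rfloor>)"
      by (intro continuous_intros)
    show "(\<lambda>s. s + of_int \<lfloor>a\<rfloor>) ` {fst (v j)..1 + fst (v i)} \<subseteq> {a..b}"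
      using aeq beq by auto
  qed
qed


locale shp =
  fixes e :: edge and xi xj :: real
  assumes fl: "frac (e_lo e) = xj" and hi: "e_hi e = of_int \<lfloor>e_lo e\<rfloor> + 1 + xi"
    and xs: "0 < xi" "xi < xj" "xj < 1"
begin

lemma lo: "e_lo e = of_int \<lfloor>e_lo e\<rfloor> + xj"
  using fl by (simp add: frac_def)

lemma pts: "p \<in> edge_pts e \<longleftrightarrow> (\<exists>s. xj \<le> s \<and> s \<le> 1 + xi \<and> p = (frac s, Ue e s))"
proof
  assume "p \<in> edge_pts e"
  then obtain t where t: "e_lo e \<le> t" "t \<le> e_hi e" "p = (frac t, e_fun e t)"
    by (auto simp: edge_pts_def)
  define s where "s = t - of_int \<lfloor>e_lo e\<rfloor>"
  have "t = s + of_int \<lfloor>e_lo e\<rfloor>" by (simp add: s_def)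
  then show "\<exists>s. xj \<le> s \<and> s \<le> 1 + xi \<and> p = (frac s, Ue e s)"
    using t lo hi by (intro exI[of _ s]) (auto simp: Ue_def)
next
  assume "\<exists>s. xj \<le> s \<and> s \<le> 1 + xi \<and> p = (frac s, Ue e s)"
  then obtain s where s: "xj \<le> s" "s \<le> 1 + xi" "p = (frac s, Ue e s)" by blast
  show "p \<in> edge_pts e" unfolding edge_pts_def
    using s lo hi by (auto simp: Ue_def intro!: exI[of _ "s + of_int \<lfloor>e_lo e\<rfloor>"])
qed

lemma relint: "p \<in> edge_relint e \<longleftrightarrow> (\<exists>s. xj < s \<and> s < 1 + xi \<and> p = (frac s, Ue e s))"
proof
  assume "p \<in> edge_relint e"
  then obtain t where t: "e_lo e < t" "t < e_hi e" "p = (frac t, e_fun e t)"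
    by (auto simp: edge_relint_def)
  define s where "s = t - of_int \<lfloor>e_lo e\<rfloor>"
  have "t = s + of_int \<lfloor>e_lo e\<rfloor>" by (simp add: s_def)
  then show "\<exists>s. xj < s \<and> s < 1 + xi \<and> p = (frac s, Ue e s)"
    using t lo hi by (intro exI[of _ s]) (auto simp: Ue_def)
next
  assume "\<exists>s. xj < s \<and> s < 1 + xi \<and> p = (frac s, Ue e s)"
  then obtain s where s: "xj < s" "s < 1 + xi" "p = (frac s, Ue e s)" by blast
  show "p \<in> edge_relint e" unfolding edge_relint_def
    using s lo hi by (auto simp: Ue_def intro!: exI[of _ "s + of_int \<lfloor>e_lo e\<rfloor>"])
qed

lemma ey: assumes "xj \<le> s" "s \<le> 1 + xi" "frac s = frac x" shows "edge_y e x = Ue e s"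
proof -
  let ?t = "s + of_int \<lfloor>e_lo e\<rfloor>"
  have "(THE t. e_lo e \<le> t \<and> t \<le> e_hi e \<and> frac t = frac x) = ?t"
  proof (rule the_equality)
    show "e_lo e \<le> ?t \<and> ?t \<le> e_hi e \<and> frac ?t = frac x" using assms lo hi by auto
    fix t assume t: "e_lo e \<le> t \<and> t \<le> e_hi e \<and> frac t = frac x"
    show "t = ?t"
    proof (rule frac_inj)
      show "frac t = frac ?t" using t assms by simp
      show "\<bar>t - ?t\<bar> < 1" using t assms lo hi xs by auto
    qed
  qed
  then show ?thesis by (simp add: edge_y_def Ue_def)
qed

lemma below: assumes "xj < s0" "s0 < 1 + xi" "frac s0 = fst p"
  shows "pt_below p e \<longleftrightarrow> snd p < Ue e s0"
proof
  assume "pt_below p e"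
  then obtain t where t: "e_lo e < t" "t < e_hi e" "frac t = fst p" "snd p < e_fun e t"
    by (auto simp: pt_below_def)
  have "t = s0 + of_int \<lfloor>e_lo e\<rfloor>"
  proof (rule frac_inj)
    show "frac t = frac (s0 + of_int \<lfloor>e_lo e\<rfloor>)" using t assms by simp
    show "\<bar>t - (s0 + of_int \<lfloor>e_lo e\<rfloor>)\<bar> < 1" using t assms lo hi xs by auto
  qed
  then show "snd p < Ue e s0" using t by (simp add: Ue_def)
next
  assume "snd p < Ue e s0"
  then show "pt_below p e" unfolding pt_below_def using assms lo hi
    by (auto simp: Ue_def intro!: exI[of _ "s0 + of_int \<lfloor>e_lo e\<rfloor>"])
qed

lemma above: assumes "xj < s0" "s0 < 1 + xi" "frac s0 = fst p"
  shows "pt_above p e \<longleftrightarrow> Ue e s0 < snd p"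
proof
  assume "pt_above p e"
  then obtain t where t: "e_lo e < t" "t < e_hi e" "frac t = fst p" "e_fun e t < snd p"
    by (auto simp: pt_above_def)
  have "t = s0 + of_int \<lfloor>e_lo e\<rfloor>"
  proof (rule frac_inj)
    show "frac t = frac (s0 + of_int \<lfloor>e_lo e\<rfloor>)" using t assms by simp
    show "\<bar>t - (s0 + of_int \<lfloor>e_lo e\<rfloor>)\<bar> < 1" using t assms lo hi xs by auto
  qed
  then show "Ue e s0 < snd p" using t by (simp add: Ue_def)
next
  assume "Ue e s0 < snd p"
  then show "pt_above p e" unfolding pt_above_def using assms lo hi
    by (auto simp: Ue_def intro!: exI[of _ "s0 + of_int \<lfloor>e_lo e\<rfloor>"])
qed

end



lemma frac_1_2: "1 \<le> (s::real) \<Longrightarrow> s < 2 \<Longrightarrow> frac s = s - 1"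
  by (subst frac_unique_iff) auto

lemma frac_01: "0 \<le> (s::real) \<Longrightarrow> s < 1 \<Longrightarrow> frac s = s"
  by (simp add: frac_eq)

lemma frac_1p: "frac (1 + (s::real)) = frac s"
  by (metis add.commute frac_1_eq)

theorem claim12:
  fixes n :: nat and v :: "nat \<Rightarrow> point" and E :: "nat \<Rightarrow> nat \<Rightarrow> edge"
    and i1 i2 i3 i4 :: nat
  assumes flag: "is_flag n v E"
    and idx: "0 < i1" "i1 < i2" "i2 < i3" "i3 < i4" "i4 \<le> n"
  shows
   "(pt_below (v i3) (E i1 i2) \<and> pt_below (v i4) (E i1 i2) \<longrightarrow>
      (edges_cross (E i1 i2) (E i3 i4) \<longleftrightarrow>
         curves_cross (plus_part (E i1 i2) (v i2)) (minus_part (E i3 i4) (v i3))) \<and>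
      (curves_cross (plus_part (E i1 i2) (v i2)) (minus_part (E i3 i4) (v i3)) \<longleftrightarrow>
         pt_below (v i2) (E i3 i4) \<and> pt_above (v i1) (E i3 i4) \<and>
         curve_prec (minus_part (E i3 i4) (v i3)) (minus_part (E i1 i2) (v i1))) \<and>
      (edges_disjoint (E i1 i2) (E i3 i4) \<longleftrightarrow>
         pt_above (v i1) (E i3 i4) \<and> pt_above (v i2) (E i3 i4)))
    \<and>
    (pt_above (v i3) (E i1 i2) \<and> pt_above (v i4) (E i1 i2) \<longrightarrow>
      (edges_cross (E i1 i2) (E i3 i4) \<longleftrightarrow>
         curves_cross (plus_part (E i1 i2) (v i2)) (minus_part (E i3 i4) (v i3))) \<and>
      (curves_cross (plus_part (E i1 i2) (v i2)) (minus_part (E i3 i4) (v i3)) \<longleftrightarrow>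
         pt_above (v i2) (E i3 i4) \<and> pt_below (v i1) (E i3 i4) \<and>
         curve_prec (minus_part (E i1 i2) (v i1)) (minus_part (E i3 i4) (v i3))) \<and>
      (edges_disjoint (E i1 i2) (E i3 i4) \<longleftrightarrow>
         pt_below (v i1) (E i3 i4) \<and> pt_below (v i2) (E i3 i4)))"
proof -
  define e where "e = E i1 i2"
  define f where "f = E i3 i4"
  define g where "g = E i2 i3"
  define x1 where "x1 = fst (v i1)"
  define x2 where "x2 = fst (v i2)"
  define x3 where "x3 = fst (v i3)"
  define x4 where "x4 = fst (v i4)"
  have i1: "1 \<le> i1" using idx by simp
  note fl = flag[unfolded is_flag_def]
  note F0 = conjunct1[OF fl]
  note F1 = conjunct1[OF conjunct2[OF fl]]
  note F2 = conjunct1[OF conjunct2[OF conjunct2[OF fl]]]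
  note F3 = conjunct1[OF conjunct2[OF conjunct2[OF conjunct2[OF fl]]]]
  note F4 = conjunct2[OF conjunct2[OF conjunct2[OF conjunct2[OF fl]]]]
  have pos: "\<And>i. i \<in> {1..n} \<Longrightarrow> 0 < fst (v i) \<and> fst (v i) < 1"
    using F0 by blast
  have ord: "\<And>i j. 1 \<le> i \<Longrightarrow> i < j \<Longrightarrow> j \<le> n \<Longrightarrow> fst (v i) < fst (v j)"
    using F1 by blast
  have xs: "0 < x1" "x1 < x2" "x2 < x3" "x3 < x4" "x4 < 1"
    unfolding x1_def x2_def x3_def x4_def
  proof -
    have "i2 \<le> n" "i3 \<le> n" "1 \<le> i2" "1 \<le> i3" "1 \<le> i4" "i1 \<le> n" using idx by linarith+
    then show "0 < fst (v i1)" "fst (v i1) < fst (v i2)" "fst (v i2) < fst (v i3)" "fst (v i3) < fst (v i4)" "fst (v i4) < 1"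
      using pos[of i1] pos[of i4] ord[of i1 i2] ord[of i2 i3] ord[of i3 i4] idx i1 by simp_all
  qed
  have i2n: "i2 \<le> n" and i3n: "i3 \<le> n" and i21: "1 \<le> i2" and i31: "1 \<le> i3" using idx by linarith+
  note she = edge_shape[OF flag i1 idx(2) i2n, folded e_def x1_def x2_def]
  note shf = edge_shape[OF flag i31 idx(4) idx(5), folded f_def x3_def x4_def]
  note shg = edge_shape[OF flag i21 idx(3) i3n, folded g_def x2_def x3_def]
  interpret se: shp e x1 x2 using she(1,2) xs by unfold_locales auto
  interpret sf: shp f x3 x4 using shf(1,2) xs by unfold_locales auto
  interpret sg: shp g x2 x3 using shg(1,2) xs by unfold_locales auto
  have v1: "v i1 = (x1, Ue e (1 + x1))" using she(4) by (simp add: x1_def prod_eq_iff)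
  have v2: "v i2 = (x2, Ue e x2)" using she(3) by (simp add: x2_def prod_eq_iff)
  have v3: "v i3 = (x3, Ue f (1 + x3))" using shf(4) by (simp add: x3_def prod_eq_iff)
  have v4: "v i4 = (x4, Ue f x4)" using shf(3) by (simp add: x4_def prod_eq_iff)
  have g3: "Ue g x3 = Ue f (x3 + 1)" using shg(3) shf(4) by (simp add: x3_def add.commute)
  have g2: "Ue g (1 + x2) = Ue e x2" using shg(4) she(3) by (simp add: x2_def)
  have i4n: "i4 \<le> n" and i41: "1 \<le> i4" and i1n: "i1 \<le> n" using idx by linarith+
  have nv3: "v i3 \<notin> edge_pts e" using F3[rule_format, of i1 i2 i3] idx i1 i2n i3n i31 unfolding e_def by simp
  have nv4: "v i4 \<notin> edge_pts e" using F3[rule_format, of i1 i2 i4] idx i1 i2n i41 unfolding e_def by simp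
  have nv1: "v i1 \<notin> edge_pts f" using F3[rule_format, of i3 i4 i1] idx i1 i1n i31 unfolding f_def by simp
  have nv2: "v i2 \<notin> edge_pts f" using F3[rule_format, of i3 i4 i2] idx i21 i2n i31 unfolding f_def by simp
  have Ief: "(\<forall>p\<in>edge_pts e \<inter> edge_pts f. \<forall>q\<in>edge_pts e \<inter> edge_pts f. p = q) \<and>
        (\<forall>p\<in>edge_pts e \<inter> edge_pts f. p \<in> {v i1, v i2} \<inter> {v i3, v i4} \<or> proper_cross e f p)"
    using F4[rule_format, of i1 i2 i3 i4] idx i1 i2n i31 unfolding e_def f_def by simp
  have Ieg: "(\<forall>p\<in>edge_pts e \<inter> edge_pts g. \<forall>q\<in>edge_pts e \<inter> edge_pts g. p = q)"
    using F4[rule_format, of i1 i2 i2 i3] idx i1 i2n i3n i21 unfolding e_def g_def by simp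
  have Igf: "(\<forall>p\<in>edge_pts g \<inter> edge_pts f. \<forall>q\<in>edge_pts g \<inter> edge_pts f. p = q)"
    using F4[rule_format, of i2 i3 i3 i4] idx i21 i3n i31 unfolding g_def f_def by simp
  have vdisj: "{v i1, v i2} \<inter> {v i3, v i4} = {}"
  proof -
    have "v i1 \<noteq> v i3" "v i1 \<noteq> v i4" "v i2 \<noteq> v i3" "v i2 \<noteq> v i4"
      using xs v1 v2 v3 v4 by auto
    then show ?thesis by auto
  qed
  have unEF: "p = q" if "p \<in> edge_pts e" "p \<in> edge_pts f" "q \<in> edge_pts e" "q \<in> edge_pts f" for p q
    using Ief that by blast
  have crEF: "proper_cross e f p" if "p \<in> edge_pts e" "p \<in> edge_pts f" for p
    using Ief that vdisj by blast
  have v2e: "v i2 \<in> edge_pts e" unfolding se.pts using v2 xs by (intro exI[of _ x2]) (auto simp: frac_01)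
  have v2g: "v i2 \<in> edge_pts g" unfolding sg.pts using v2 xs g2 by (intro exI[of _ "1+x2"]) (auto simp: frac_1p frac_01)
  have v3g: "v i3 \<in> edge_pts g" unfolding sg.pts using v3 xs g3 by (intro exI[of _ x3]) (auto simp: frac_01 add.commute)
  have v3f: "v i3 \<in> edge_pts f" unfolding sf.pts using v3 xs by (intro exI[of _ "1+x3"]) (auto simp: frac_1p frac_01)
  have unEG: "p = v i2" if "p \<in> edge_pts e" "p \<in> edge_pts g" for p
    using Ieg that v2e v2g by blast
  have unGF: "p = v i3" if "p \<in> edge_pts g" "p \<in> edge_pts f" for p
    using Igf that v3g v3f by blast
  have n4: "Ue f x4 \<noteq> Ue e x4"
  proof
    assume h: "Ue f x4 = Ue e x4"
    have "v i4 \<in> edge_pts e" unfolding se.pts using v4 xs h by (intro exI[of _ x4]) (auto simp: frac_01)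
    then show False using nv4 by simp
  qed
  have n1: "Ue f (1+x1) \<noteq> Ue e (1+x1)"
  proof
    assume h: "Ue f (1+x1) = Ue e (1+x1)"
    have "v i1 \<in> edge_pts f" unfolding sf.pts using v1 xs h by (intro exI[of _ "1+x1"]) (auto simp: frac_1p frac_01)
    then show False using nv1 by simp
  qed
  have n2: "Ue f (x2+1) \<noteq> Ue e x2"
  proof
    assume h: "Ue f (x2+1) = Ue e x2"
    have "v i2 \<in> edge_pts f" unfolding sf.pts using v2 xs h by (intro exI[of _ "x2+1"]) (auto simp: frac_1_eq frac_01)
    then show False using nv2 by simp
  qed
  have n3: "Ue f (x3+1) \<noteq> Ue e x3"
  proof
    assume h: "Ue f (x3+1) = Ue e x3"
    have "v i3 \<in> edge_pts e" unfolding se.pts using v3 xs h by (intro exI[of _ x3]) (auto simp: frac_01 add.commute)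
    then show False using nv3 by simp
  qed
  define ZA where "ZA = (\<lambda>s. x4 \<le> s \<and> s \<le> 1+x1 \<and> Ue f s = Ue e s)"
  define ZB where "ZB = (\<lambda>s. x2 \<le> s \<and> s \<le> x3 \<and> Ue f (s+1) = Ue e s)"
  have com1: "\<exists>s. (ZA s \<or> ZB s) \<and> x2 \<le> s \<and> s \<le> 1 + x1 \<and> p = (frac s, Ue e s)"
    if pe: "p \<in> edge_pts e" and pf: "p \<in> edge_pts f" for p
  proof -
    obtain s where s: "x2 \<le> s" "s \<le> 1 + x1" "p = (frac s, Ue e s)" using pe se.pts by meson
    obtain s' where s': "x4 \<le> s'" "s' \<le> 1 + x3" "p = (frac s', Ue f s')" using pf sf.pts by meson
    have "(frac s, Ue e s) = (frac s', Ue f s')" using s(3) s'(3) by simp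
    then have "frac s' = frac s" by simp
    then obtain k where k: "s' = s + of_int k" by (elim frac_eqE)
    have "(-1::real) < of_int k" "of_int k < (2::real)" using k s(1,2) s'(1,2) xs by linarith+
    then have "-1 < k" "k < 2" by simp_all
    then have "k = 0 \<or> k = 1" by linarith
    then have "ZA s \<or> ZB s"
    proof
      assume "k = 0"
      then have "s' = s" using k by simp
      then show ?thesis using s(1,2) s'(1,2) s(3) s'(3) unfolding ZA_def by simp
    next
      assume "k = 1"
      then have "s' = s + 1" using k by simp
      then show ?thesis using s(1,2) s'(1,2) s(3) s'(3) xs unfolding ZB_def by simp
    qed
    then show ?thesis using s by blast
  qed
  have com2: "(frac s, Ue e s) \<in> edge_pts e \<and> (frac s, Ue e s) \<in> edge_pts f" if "ZA s \<or> ZB s" for s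
  proof
    show "(frac s, Ue e s) \<in> edge_pts e" unfolding se.pts using that xs
      by (intro exI[of _ s]) (auto simp: ZA_def ZB_def)
    show "(frac s, Ue e s) \<in> edge_pts f" unfolding sf.pts
    proof (cases "ZA s")
      case True then show "\<exists>t. x4 \<le> t \<and> t \<le> 1 + x3 \<and> (frac s, Ue e s) = (frac t, Ue f t)"
        using xs by (intro exI[of _ s]) (auto simp: ZA_def)
    next
      case False then have "ZB s" using that by blast
      then show "\<exists>t. x4 \<le> t \<and> t \<le> 1 + x3 \<and> (frac s, Ue e s) = (frac t, Ue f t)"
        using xs by (intro exI[of _ "s+1"]) (auto simp: ZB_def frac_1_eq)
    qed
  qed
  have Zrange: "x2 \<le> s \<and> s \<le> 1 + x1" if "ZA s \<or> ZB s" for s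
    using that xs by (auto simp: ZA_def ZB_def)
  have uniq: "s = s'" if "ZA s \<or> ZB s" "ZA s' \<or> ZB s'" for s s'
  proof (rule frac_inj)
    have c1: "(frac s, Ue e s) \<in> edge_pts e \<and> (frac s, Ue e s) \<in> edge_pts f" by (rule com2[OF that(1)])
    have c2: "(frac s', Ue e s') \<in> edge_pts e \<and> (frac s', Ue e s') \<in> edge_pts f" by (rule com2[OF that(2)])
    have "(frac s, Ue e s) = (frac s', Ue e s')" using unEF[OF conjunct1[OF c1] conjunct2[OF c1] conjunct1[OF c2] conjunct2[OF c2]] .
    then show "frac s = frac s'" by simp
    show "\<bar>s - s'\<bar> < 1" using Zrange[OF that(1)] Zrange[OF that(2)] xs by auto
  qed
  have crA: "\<exists>\<delta>>0. \<forall>\<sigma>. 0 < \<sigma> \<and> \<sigma> < \<delta> \<longrightarrow> (Ue f (s-\<sigma>) - Ue e (s-\<sigma>)) * (Ue f (s+\<sigma>) - Ue e (s+\<sigma>)) < 0"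
    if hs: "x4 \<le> s" "s \<le> 1+x1" "Ue f s = Ue e s" for s
  proof -
    have Z: "ZA s \<or> ZB s" using hs unfolding ZA_def by blast
    have pc: "proper_cross e f (frac s, Ue e s)" using crEF com2[OF Z] by blast
    have s4: "s \<noteq> x4" using n4 hs by auto
    have s1: "s \<noteq> 1 + x1" using n1 hs by auto
    obtain \<delta> where d: "\<delta> > 0" and D: "(\<forall>\<sigma>. 0 < \<sigma> \<and> \<sigma> < \<delta> \<longrightarrow>
            edge_y e (frac s - \<sigma>) < edge_y f (frac s - \<sigma>) \<and> edge_y f (frac s + \<sigma>) < edge_y e (frac s + \<sigma>)) \<or>
        (\<forall>\<sigma>. 0 < \<sigma> \<and> \<sigma> < \<delta> \<longrightarrow>
            edge_y f (frac s - \<sigma>) < edge_y e (frac s - \<sigma>) \<and> edge_y e (frac s + \<sigma>) < edge_y f (frac s + \<sigma>))"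
      using pc unfolding proper_cross_def by auto
    define d' where "d' = min \<delta> (min (s - x4) (1 + x1 - s))"
    have d'pos: "d' > 0" using d hs s4 s1 by (auto simp: d'_def)
    have key: "edge_y e (frac s - \<sigma>) = Ue e (s-\<sigma>) \<and> edge_y f (frac s - \<sigma>) = Ue f (s-\<sigma>) \<and>
       edge_y e (frac s + \<sigma>) = Ue e (s+\<sigma>) \<and> edge_y f (frac s + \<sigma>) = Ue f (s+\<sigma>)"
      if "0 < \<sigma>" "\<sigma> < d'" for \<sigma>
    proof -
      have r: "x4 \<le> s - \<sigma>" "s + \<sigma> \<le> 1 + x1" using that by (auto simp: d'_def)
      have f1: "frac (s - \<sigma>) = frac (frac s - \<sigma>)" by (simp add: frac_minus_frac)
      have f2: "frac (s + \<sigma>) = frac (frac s + \<sigma>)" by simp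
      show ?thesis
        using se.ey[OF _ _ f1] sf.ey[OF _ _ f1] se.ey[OF _ _ f2] sf.ey[OF _ _ f2] r that xs by auto
    qed
    show ?thesis
    proof (intro exI[of _ d'] conjI allI impI)
      show "d' > 0" by (rule d'pos)
      fix \<sigma> assume "0 < \<sigma> \<and> \<sigma> < d'"
      then have sg: "0 < \<sigma>" "\<sigma> < d'" "\<sigma> < \<delta>" by (auto simp: d'_def)
      note k = key[OF sg(1,2)]
      from D show "(Ue f (s-\<sigma>) - Ue e (s-\<sigma>)) * (Ue f (s+\<sigma>) - Ue e (s+\<sigma>)) < 0"
      proof
        assume "\<forall>\<sigma>. 0 < \<sigma> \<and> \<sigma> < \<delta> \<longrightarrow>
            edge_y e (frac s - \<sigma>) < edge_y f (frac s - \<sigma>) \<and> edge_y f (frac s + \<sigma>) < edge_y e (frac s + \<sigma>)"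
        then have "Ue e (s-\<sigma>) < Ue f (s-\<sigma>)" "Ue f (s+\<sigma>) < Ue e (s+\<sigma>)" using sg k by auto
        then show ?thesis by (intro mult_pos_neg) auto
      next
        assume "\<forall>\<sigma>. 0 < \<sigma> \<and> \<sigma> < \<delta> \<longrightarrow>
            edge_y f (frac s - \<sigma>) < edge_y e (frac s - \<sigma>) \<and> edge_y e (frac s + \<sigma>) < edge_y f (frac s + \<sigma>)"
        then have "Ue f (s-\<sigma>) < Ue e (s-\<sigma>)" "Ue e (s+\<sigma>) < Ue f (s+\<sigma>)" using sg k by auto
        then show ?thesis by (intro mult_neg_pos) auto
      qed
    qed
  qed
  have crB: "\<exists>\<delta>>0. \<forall>\<sigma>. 0 < \<sigma> \<and> \<sigma> < \<delta> \<longrightarrow> (Ue f (s-\<sigma>+1) - Ue e (s-\<sigma>)) * (Ue f (s+\<sigma>+1) - Ue e (s+\<sigma>)) < 0"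
    if hs: "x2 \<le> s" "s \<le> x3" "Ue f (s+1) = Ue e s" for s
  proof -
    have Z: "ZA s \<or> ZB s" using hs unfolding ZB_def by blast
    have pc: "proper_cross e f (frac s, Ue e s)" using crEF com2[OF Z] by blast
    have s2: "s \<noteq> x2" using n2 hs by auto
    have s3: "s \<noteq> x3" using n3 hs by auto
    obtain \<delta> where d: "\<delta> > 0" and D: "(\<forall>\<sigma>. 0 < \<sigma> \<and> \<sigma> < \<delta> \<longrightarrow>
            edge_y e (frac s - \<sigma>) < edge_y f (frac s - \<sigma>) \<and> edge_y f (frac s + \<sigma>) < edge_y e (frac s + \<sigma>)) \<or>
        (\<forall>\<sigma>. 0 < \<sigma> \<and> \<sigma> < \<delta> \<longrightarrow>
            edge_y f (frac s - \<sigma>) < edge_y e (frac s - \<sigma>) \<and> edge_y e (frac s + \<sigma>) < edge_y f (frac s + \<sigma>))"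
      using pc unfolding proper_cross_def by auto
    define d' where "d' = min \<delta> (min (s - x2) (x3 - s))"
    have d'pos: "d' > 0" using d hs s2 s3 by (auto simp: d'_def)
    have key: "edge_y e (frac s - \<sigma>) = Ue e (s-\<sigma>) \<and> edge_y f (frac s - \<sigma>) = Ue f (s-\<sigma>+1) \<and>
       edge_y e (frac s + \<sigma>) = Ue e (s+\<sigma>) \<and> edge_y f (frac s + \<sigma>) = Ue f (s+\<sigma>+1)"
      if "0 < \<sigma>" "\<sigma> < d'" for \<sigma>
    proof -
      have r: "x2 \<le> s - \<sigma>" "s + \<sigma> \<le> x3" using that by (auto simp: d'_def)
      have f1: "frac (s - \<sigma>) = frac (frac s - \<sigma>)" by (simp add: frac_minus_frac)
      have f2: "frac (s + \<sigma>) = frac (frac s + \<sigma>)" by simp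
      have f3: "frac (s - \<sigma> + 1) = frac (frac s - \<sigma>)" by (simp add: frac_minus_frac frac_1_eq)
      have f4: "frac (s + \<sigma> + 1) = frac (frac s + \<sigma>)" by (simp add: frac_1_eq)
      show ?thesis
        using se.ey[OF _ _ f1] sf.ey[OF _ _ f3] se.ey[OF _ _ f2] sf.ey[OF _ _ f4] r that xs by auto
    qed
    show ?thesis
    proof (intro exI[of _ d'] conjI allI impI)
      show "d' > 0" by (rule d'pos)
      fix \<sigma> assume "0 < \<sigma> \<and> \<sigma> < d'"
      then have sg: "0 < \<sigma>" "\<sigma> < d'" "\<sigma> < \<delta>" by (auto simp: d'_def)
      note k = key[OF sg(1,2)]
      from D show "(Ue f (s-\<sigma>+1) - Ue e (s-\<sigma>)) * (Ue f (s+\<sigma>+1) - Ue e (s+\<sigma>)) < 0"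
      proof
        assume "\<forall>\<sigma>. 0 < \<sigma> \<and> \<sigma> < \<delta> \<longrightarrow>
            edge_y e (frac s - \<sigma>) < edge_y f (frac s - \<sigma>) \<and> edge_y f (frac s + \<sigma>) < edge_y e (frac s + \<sigma>)"
        then have "Ue e (s-\<sigma>) < Ue f (s-\<sigma>+1)" "Ue f (s+\<sigma>+1) < Ue e (s+\<sigma>)" using sg k by auto
        then show ?thesis by (intro mult_pos_neg) auto
      next
        assume "\<forall>\<sigma>. 0 < \<sigma> \<and> \<sigma> < \<delta> \<longrightarrow>
            edge_y f (frac s - \<sigma>) < edge_y e (frac s - \<sigma>) \<and> edge_y e (frac s + \<sigma>) < edge_y f (frac s + \<sigma>)"
        then have "Ue f (s-\<sigma>+1) < Ue e (s-\<sigma>)" "Ue e (s+\<sigma>) < Ue f (s+\<sigma>+1)" using sg k by auto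
        then show ?thesis by (intro mult_neg_pos) auto
      qed
    qed
  qed
  have GE: "\<forall>s\<in>{x3..1+x1}. Ue g s \<noteq> Ue e s"
  proof (intro ballI notI)
    fix s assume s: "s \<in> {x3..1+x1}" and h: "Ue g s = Ue e s"
    have pe: "(frac s, Ue e s) \<in> edge_pts e" unfolding se.pts using s xs by (intro exI[of _ s]) auto
    have pg: "(frac s, Ue e s) \<in> edge_pts g" unfolding sg.pts using s xs h by (intro exI[of _ s]) auto
    have "(frac s, Ue e s) = v i2" by (rule unEG[OF pe pg])
    then have "frac s = frac x2" using v2 xs by (simp add: frac_01)
    then show False using frac_neq_shift[of s x2] s xs by auto
  qed
  have GF: "\<forall>s\<in>{x4..1+x2}. Ue g s \<noteq> Ue f s"
  proof (intro ballI notI)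
    fix s assume s: "s \<in> {x4..1+x2}" and h: "Ue g s = Ue f s"
    have pg: "(frac s, Ue g s) \<in> edge_pts g" unfolding sg.pts using s xs by (intro exI[of _ s]) auto
    have pf: "(frac s, Ue g s) \<in> edge_pts f" unfolding sf.pts using s xs h by (intro exI[of _ s]) auto
    have "(frac s, Ue g s) = v i3" by (rule unGF[OF pg pf])
    then have "frac s = frac x3" using v3 xs by (simp add: frac_01)
    then show False using frac_neq_shift[of s x3] s xs by auto
  qed
  have fx3: "frac x3 = fst (v i3)" using v3 xs by (simp add: frac_01)
  have fx4: "frac x4 = fst (v i4)" using v4 xs by (simp add: frac_01)
  have fx2: "frac (x2+1) = fst (v i2)" using v2 xs by (simp add: frac_01 frac_1_eq)
  have fx1: "frac (1+x1) = fst (v i1)" using v1 xs by (simp add: frac_01 frac_1p)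
  have pb3: "pt_below (v i3) e \<longleftrightarrow> Ue f (x3+1) < Ue e x3"
    using se.below[OF _ _ fx3] xs v3 by (simp add: add.commute)
  have pa3: "pt_above (v i3) e \<longleftrightarrow> Ue e x3 < Ue f (x3+1)"
    using se.above[OF _ _ fx3] xs v3 by (simp add: add.commute)
  have pb4: "pt_below (v i4) e \<longleftrightarrow> Ue f x4 < Ue e x4"
    using se.below[OF _ _ fx4] xs v4 by simp
  have pa4: "pt_above (v i4) e \<longleftrightarrow> Ue e x4 < Ue f x4"
    using se.above[OF _ _ fx4] xs v4 by simp
  have pb2: "pt_below (v i2) f \<longleftrightarrow> Ue e x2 < Ue f (x2+1)"
    using sf.below[OF _ _ fx2] xs v2 by simp
  have pa2: "pt_above (v i2) f \<longleftrightarrow> Ue f (x2+1) < Ue e x2"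
    using sf.above[OF _ _ fx2] xs v2 by simp
  have pb1: "pt_below (v i1) f \<longleftrightarrow> Ue e (1+x1) < Ue f (1+x1)"
    using sf.below[OF _ _ fx1] xs v1 by simp
  have pa1: "pt_above (v i1) f \<longleftrightarrow> Ue f (1+x1) < Ue e (1+x1)"
    using sf.above[OF _ _ fx1] xs v1 by simp
  have uniqI: "s = s'" if "(x4 \<le> s \<and> s \<le> 1+x1 \<and> Ue f s = Ue e s) \<or> (x2 \<le> s \<and> s \<le> x3 \<and> Ue f (s+1) = Ue e s)"
     "(x4 \<le> s' \<and> s' \<le> 1+x1 \<and> Ue f s' = Ue e s') \<or> (x2 \<le> s' \<and> s' \<le> x3 \<and> Ue f (s'+1) = Ue e s')" for s s'
    by (rule uniq) (use that in \<open>simp_all add: ZA_def ZB_def\<close>)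
  have relpts: "edge_relint h \<subseteq> edge_pts h" for h
    unfolding edge_relint_def edge_pts_def by force
  have Fcross: "edges_cross e f \<longleftrightarrow> (\<exists>s. ZA s \<or> ZB s)"
  proof
    assume "edges_cross e f"
    then obtain p where pc: "proper_cross e f p" unfolding edges_cross_def by blast
    then have "p \<in> edge_pts e" "p \<in> edge_pts f" using relpts unfolding proper_cross_def by blast+
    then show "\<exists>s. ZA s \<or> ZB s" using com1 by blast
  next
    assume "\<exists>s. ZA s \<or> ZB s"
    then obtain s where "ZA s \<or> ZB s" by blast
    then show "edges_cross e f" unfolding edges_cross_def using com2 crEF by blast
  qed
  have Fdisj: "edges_disjoint e f \<longleftrightarrow> \<not> (\<exists>s. ZA s \<or> ZB s)"
  proof
    assume d: "edges_disjoint e f"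
    show "\<not> (\<exists>s. ZA s \<or> ZB s)"
    proof
      assume "\<exists>s. ZA s \<or> ZB s"
      then obtain s where "ZA s \<or> ZB s" by blast
      then show False using com2 d unfolding edges_disjoint_def by blast
    qed
  next
    assume n: "\<not> (\<exists>s. ZA s \<or> ZB s)"
    show "edges_disjoint e f" unfolding edges_disjoint_def
    proof (rule ccontr)
      assume "edge_pts e \<inter> edge_pts f \<noteq> {}"
      then obtain p where "p \<in> edge_pts e" "p \<in> edge_pts f" by blast
      then show False using com1 n by blast
    qed
  qed
  have Fcc: "curves_cross (plus_part e (v i2)) (minus_part f (v i3)) \<longleftrightarrow> (\<exists>s. ZB s)"
  proof
    assume "curves_cross (plus_part e (v i2)) (minus_part f (v i3))"
    then obtain p where p: "p \<in> edge_pts e" "x2 < fst p" "fst p < 1" "p \<in> edge_pts f" "fst p < x3"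
      unfolding curves_cross_def curve_pts_def plus_part_def minus_part_def using v2 v3 by auto
    obtain s where s: "ZA s \<or> ZB s" "p = (frac s, Ue e s)" using com1[OF p(1) p(4)] by blast
    have "\<not> ZA s"
    proof
      assume z: "ZA s"
      show False
      proof (cases "s < 1")
        case True
        then have "frac s = s" using z xs by (simp add: frac_01 ZA_def)
        then show False using z p s xs by (auto simp: ZA_def)
      next
        case False
        then have "frac s = s - 1" using z xs by (intro frac_1_2) (auto simp: ZA_def)
        then show False using z p s xs by (auto simp: ZA_def)
      qed
    qed
    then show "\<exists>s. ZB s" using s by blast
  next
    assume "\<exists>s. ZB s"
    then obtain s where z: "ZB s" by blast
    have s2: "s \<noteq> x2" using z n2 by (auto simp: ZB_def)
    have s3: "s \<noteq> x3" using z n3 by (auto simp: ZB_def)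
    have fs: "frac s = s" using z xs by (intro frac_01) (auto simp: ZB_def)
    have c: "(frac s, Ue e s) \<in> edge_pts e \<and> (frac s, Ue e s) \<in> edge_pts f" using com2 z by blast
    have pc: "proper_cross e f (frac s, Ue e s)" using crEF c by blast
    show "curves_cross (plus_part e (v i2)) (minus_part f (v i3))"
      unfolding curves_cross_def curve_pts_def plus_part_def minus_part_def
      using c pc fs z s2 s3 xs v2 v3 by (intro exI[of _ "(frac s, Ue e s)"]) (auto simp: ZB_def)
  qed
  have noZcross: "\<not> (\<exists>p. p \<in> edge_pts e \<and> p \<in> edge_pts f \<and> fst p < x1)"
    if nA: "\<forall>s. \<not> ZA s" 
  proof
    assume "\<exists>p. p \<in> edge_pts e \<and> p \<in> edge_pts f \<and> fst p < x1"
    then obtain p where p: "p \<in> edge_pts e" "p \<in> edge_pts f" "fst p < x1" by blast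
    obtain s where s: "ZA s \<or> ZB s" "p = (frac s, Ue e s)" using com1[OF p(1) p(2)] by blast
    then have z: "ZB s" using nA by blast
    have "frac s = s" using z xs by (intro frac_01) (auto simp: ZB_def)
    then show False using z p s xs by (auto simp: ZB_def)
  qed
  have eyx: "edge_y e x = Ue e (1+x) \<and> edge_y f x = Ue f (1+x)" if "0 < x" "x < x1" for x
    using se.ey[of "1+x" x] sf.ey[of "1+x" x] that xs by (simp add: frac_1p)
  have precB: "curve_prec (minus_part f (v i3)) (minus_part e (v i1))"
    if nA: "\<forall>s\<in>{x4..1+x1}. Ue f s < Ue e s"
  proof -
    have nZ: "\<forall>s. \<not> ZA s"
    proof (intro allI notI)
      fix s assume "ZA s"
      then have "s \<in> {x4..1+x1}" "Ue f s = Ue e s" by (auto simp: ZA_def)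
      then show False using nA by force
    qed
    have lt: "\<forall>x\<in>{0<..<x3} \<inter> {0<..<x1}. edge_y f x < edge_y e x"
      using eyx nA xs by auto
    have ne: "{0<..<x3} \<inter> {0<..<x1} \<noteq> {}"
    proof -
      have "x1/2 \<in> {0<..<x3} \<inter> {0<..<x1}" using xs by auto
      then show ?thesis by blast
    qed
    show ?thesis
      unfolding curve_prec_def curves_related_def curves_cross_def curve_rixs_def curve_pts_def minus_part_def
      using noZcross[OF nZ] lt ne v1 v3 by (auto simp: less_imp_le)
  qed
  have precA: "curve_prec (minus_part e (v i1)) (minus_part f (v i3))"
    if nA: "\<forall>s\<in>{x4..1+x1}. Ue e s < Ue f s"
  proof -
    have nZ: "\<forall>s. \<not> ZA s"
    proof (intro allI notI)
      fix s assume "ZA s"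
      then have "s \<in> {x4..1+x1}" "Ue f s = Ue e s" by (auto simp: ZA_def)
      then show False using nA by force
    qed
    have lt: "\<forall>x\<in>{0<..<x1} \<inter> {0<..<x3}. edge_y e x < edge_y f x"
      using eyx nA xs by auto
    have ne: "{0<..<x1} \<inter> {0<..<x3} \<noteq> {}"
    proof -
      have "x1/2 \<in> {0<..<x1} \<inter> {0<..<x3}" using xs by auto
      then show ?thesis by blast
    qed
    show ?thesis
      unfolding curve_prec_def curves_related_def curves_cross_def curve_rixs_def curve_pts_def minus_part_def
      using noZcross[OF nZ] lt ne v1 v3 by (auto simp: less_imp_le)
  qed
  have ZBeq: "(\<exists>s. ZB s) \<longleftrightarrow> (\<exists>s\<in>{x2..x3}. Ue f (s+1) = Ue e s)"
    by (auto simp: ZB_def)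
  have ZAno: "\<not> (\<exists>s. ZA s)" if nA: "\<forall>s\<in>{x4..1+x1}. Ue f s \<noteq> Ue e s"
  proof
    assume "\<exists>s. ZA s"
    then obtain s where "ZA s" by blast
    then have "s \<in> {x4..1+x1}" "Ue f s = Ue e s" by (auto simp: ZA_def)
    then show False using nA by force
  qed
  have partB: "(pt_below (v i3) e \<and> pt_below (v i4) e \<longrightarrow>
      (edges_cross e f \<longleftrightarrow> curves_cross (plus_part e (v i2)) (minus_part f (v i3))) \<and>
      (curves_cross (plus_part e (v i2)) (minus_part f (v i3)) \<longleftrightarrow>
         pt_below (v i2) f \<and> pt_above (v i1) f \<and> curve_prec (minus_part f (v i3)) (minus_part e (v i1))) \<and>
      (edges_disjoint e f \<longleftrightarrow> pt_above (v i1) f \<and> pt_above (v i2) f))"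
  proof
    assume "pt_below (v i3) e \<and> pt_below (v i4) e"
    then have b3: "Ue f (x3+1) < Ue e x3" and b4: "Ue f x4 < Ue e x4" using pb3 pb4 by auto
    note C = core[OF xs she(5) shf(5) shg(5) uniqI crA crB n4 n1 n2 n3 g3 g2 GE GF b4 b3]
    have nA: "\<forall>s\<in>{x4..1+x1}. Ue f s \<noteq> Ue e s"
    proof
      fix s assume "s \<in> {x4..1+x1}"
      then have "Ue f s < Ue e s" using C(1) by blast
      then show "Ue f s \<noteq> Ue e s" by simp
    qed
    have m1: "1+x1 \<in> {x4..1+x1}" using xs by simp
    have a1: "pt_above (v i1) f" unfolding pa1 by (rule bspec[OF C(1) m1])
    have pr: "curve_prec (minus_part f (v i3)) (minus_part e (v i1))" by (rule precB[OF C(1)])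
    have ZBB: "(\<exists>s. ZB s) \<longleftrightarrow> Ue e x2 < Ue f (x2+1)" by (rule trans[OF ZBeq C(2)])
    show "(edges_cross e f \<longleftrightarrow> curves_cross (plus_part e (v i2)) (minus_part f (v i3))) \<and>
      (curves_cross (plus_part e (v i2)) (minus_part f (v i3)) \<longleftrightarrow>
         pt_below (v i2) f \<and> pt_above (v i1) f \<and> curve_prec (minus_part f (v i3)) (minus_part e (v i1))) \<and>
      (edges_disjoint e f \<longleftrightarrow> pt_above (v i1) f \<and> pt_above (v i2) f)"
      unfolding Fcross Fdisj Fcc pb2 pa2
    proof (intro conjI)
      have lin: "\<not> (Ue e x2 < Ue f (x2+1)) \<longleftrightarrow> Ue f (x2+1) < Ue e x2" using n2 by auto
      note za = ZAno[OF nA]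
      show "(\<exists>s. ZA s \<or> ZB s) \<longleftrightarrow> (\<exists>s. ZB s)" using za by blast
      show "(\<exists>s. ZB s) \<longleftrightarrow> Ue e x2 < Ue f (x2+1) \<and> pt_above (v i1) f \<and> curve_prec (minus_part f (v i3)) (minus_part e (v i1))"
        using ZBB a1 pr by blast
      show "(\<not> (\<exists>s. ZA s \<or> ZB s)) \<longleftrightarrow> pt_above (v i1) f \<and> Ue f (x2+1) < Ue e x2"
        using za ZBB a1 lin by blast
    qed
  qed
  have neg_prod: "(- a - - b) * (- c - - d) = (a - b) * (c - (d::real))" for a b c d
    by (simp add: algebra_simps)
  have partA: "(pt_above (v i3) e \<and> pt_above (v i4) e \<longrightarrow>
      (edges_cross e f \<longleftrightarrow> curves_cross (plus_part e (v i2)) (minus_part f (v i3))) \<and>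
      (curves_cross (plus_part e (v i2)) (minus_part f (v i3)) \<longleftrightarrow>
         pt_above (v i2) f \<and> pt_below (v i1) f \<and> curve_prec (minus_part e (v i1)) (minus_part f (v i3))) \<and>
      (edges_disjoint e f \<longleftrightarrow> pt_below (v i1) f \<and> pt_below (v i2) f))"
  proof
    assume "pt_above (v i3) e \<and> pt_above (v i4) e"
    then have b3: "- Ue f (x3+1) < - Ue e x3" and b4: "- Ue f x4 < - Ue e x4" using pa3 pa4 by auto
    have cE: "continuous_on {x2..1+x1} (\<lambda>s. - Ue e s)" using she(5) by (rule continuous_on_minus)
    have cF: "continuous_on {x4..1+x3} (\<lambda>s. - Ue f s)" using shf(5) by (rule continuous_on_minus)
    have cG: "continuous_on {x3..1+x2} (\<lambda>s. - Ue g s)" using shg(5) by (rule continuous_on_minus)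
    have uniqN: "s = s'" if "(x4 \<le> s \<and> s \<le> 1+x1 \<and> - Ue f s = - Ue e s) \<or> (x2 \<le> s \<and> s \<le> x3 \<and> - Ue f (s+1) = - Ue e s)"
       "(x4 \<le> s' \<and> s' \<le> 1+x1 \<and> - Ue f s' = - Ue e s') \<or> (x2 \<le> s' \<and> s' \<le> x3 \<and> - Ue f (s'+1) = - Ue e s')" for s s'
      by (rule uniqI) (use that in simp_all)
    have crAN: "\<exists>\<delta>>0. \<forall>\<sigma>. 0 < \<sigma> \<and> \<sigma> < \<delta> \<longrightarrow> (- Ue f (s-\<sigma>) - - Ue e (s-\<sigma>)) * (- Ue f (s+\<sigma>) - - Ue e (s+\<sigma>)) < 0"
      if "x4 \<le> s" "s \<le> 1+x1" "- Ue f s = - Ue e s" for s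
      unfolding neg_prod by (rule crA) (use that in simp_all)
    have crBN: "\<exists>\<delta>>0. \<forall>\<sigma>. 0 < \<sigma> \<and> \<sigma> < \<delta> \<longrightarrow> (- Ue f (s-\<sigma>+1) - - Ue e (s-\<sigma>)) * (- Ue f (s+\<sigma>+1) - - Ue e (s+\<sigma>)) < 0"
      if "x2 \<le> s" "s \<le> x3" "- Ue f (s+1) = - Ue e s" for s
      unfolding neg_prod by (rule crB) (use that in simp_all)
    have n4': "- Ue f x4 \<noteq> - Ue e x4" and n1': "- Ue f (1+x1) \<noteq> - Ue e (1+x1)"
      and n2': "- Ue f (x2+1) \<noteq> - Ue e x2" and n3': "- Ue f (x3+1) \<noteq> - Ue e x3"
      using n4 n1 n2 n3 by simp_all
    have g3': "- Ue g x3 = - Ue f (x3+1)" and g2': "- Ue g (1+x2) = - Ue e x2" using g3 g2 by simp_all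
    have GE': "\<forall>s\<in>{x3..1+x1}. - Ue g s \<noteq> - Ue e s" and GF': "\<forall>s\<in>{x4..1+x2}. - Ue g s \<noteq> - Ue f s"
      using GE GF by simp_all
    note C = core[of x1 x2 x3 x4 "\<lambda>s. - Ue e s" "\<lambda>s. - Ue f s" "\<lambda>s. - Ue g s",
        OF xs cE cF cG uniqN crAN crBN n4' n1' n2' n3' g3' g2' GE' GF' b4 b3]
    have C1: "\<forall>s\<in>{x4..1+x1}. Ue e s < Ue f s"
    proof
      fix s assume "s \<in> {x4..1+x1}"
      then have "- Ue f s < - Ue e s" using C(1) by blast
      then show "Ue e s < Ue f s" by simp
    qed
    have nA: "\<forall>s\<in>{x4..1+x1}. Ue f s \<noteq> Ue e s"
    proof
      fix s assume "s \<in> {x4..1+x1}"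
      then have "Ue e s < Ue f s" using C1 by blast
      then show "Ue f s \<noteq> Ue e s" by simp
    qed
    have m1: "1+x1 \<in> {x4..1+x1}" using xs by simp
    have a1: "pt_below (v i1) f" unfolding pb1 by (rule bspec[OF C1 m1])
    have pr: "curve_prec (minus_part e (v i1)) (minus_part f (v i3))" by (rule precA[OF C1])
    have ZBB0: "(\<exists>s\<in>{x2..x3}. - Ue f (s+1) = - Ue e s) \<longleftrightarrow> - Ue e x2 < - Ue f (x2+1)" by (rule C(2))
    have ZBB1: "(\<exists>s\<in>{x2..x3}. Ue f (s+1) = Ue e s) \<longleftrightarrow> Ue f (x2+1) < Ue e x2" using ZBB0 by simp
    have ZBB: "(\<exists>s. ZB s) \<longleftrightarrow> Ue f (x2+1) < Ue e x2" by (rule trans[OF ZBeq ZBB1])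
    show "(edges_cross e f \<longleftrightarrow> curves_cross (plus_part e (v i2)) (minus_part f (v i3))) \<and>
      (curves_cross (plus_part e (v i2)) (minus_part f (v i3)) \<longleftrightarrow>
         pt_above (v i2) f \<and> pt_below (v i1) f \<and> curve_prec (minus_part e (v i1)) (minus_part f (v i3))) \<and>
      (edges_disjoint e f \<longleftrightarrow> pt_below (v i1) f \<and> pt_below (v i2) f)"
      unfolding Fcross Fdisj Fcc pb1 pa2
    proof (intro conjI)
      have lin: "\<not> (Ue f (x2+1) < Ue e x2) \<longleftrightarrow> Ue e x2 < Ue f (x2+1)" using n2 by auto
      note za = ZAno[OF nA]
      show "(\<exists>s. ZA s \<or> ZB s) \<longleftrightarrow> (\<exists>s. ZB s)" using za by blast
      show "(\<exists>s. ZB s) \<longleftrightarrow> Ue f (x2+1) < Ue e x2 \<and> Ue e (1+x1) < Ue f (1+x1) \<and> curve_prec (minus_part e (v i1)) (minus_part f (v i3))"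
        using ZBB a1 pr unfolding pb1 by blast
      show "(\<not> (\<exists>s. ZA s \<or> ZB s)) \<longleftrightarrow> Ue e (1+x1) < Ue f (1+x1) \<and> pt_below (v i2) f"
        using za ZBB a1 lin unfolding pb1 pb2 by blast
    qed
  qed
  show ?thesis using conjI[OF partB partA] unfolding e_def f_def .
qed


end
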